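(* There is a meager set $M\subseteq(\omega^\omega)^2$ such that for every superperfect tree $T\subseteq\omega^{<\omega}$ there are $f\neq g$ in $[T]$ with $\langle f,g\rangle\in M$.
   Context: A tree $T\subseteq\omega^{<\omega}$ is superperfect if for every $\sigma\in T$ there is $\tau\supseteq\sigma$ in $T$ such that $\tau^\frown\langle n\rangle\in T$ for infinitely many $n$; $[T]$ is the set of infinite branches of $T$. *)

theory Defs
  imports "HOL-Analysis.Analysis" "HOL-Library.Sublist"
begin

text \<open>Baire space omega^omega is the type nat \<Rightarrow> nat with the product topology
  (library instance), nat carrying its (discrete) order topology; the square
  (omega^omega)^2 carries the product topology of the pair type.\<close>

definition nowhere_dense :: "'a::topological_space set \<Rightarrow> bool" where
  "nowhere_dense A \<longleftrightarrow> interior (closure A) = {}"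

definition meager :: "'a::topological_space set \<Rightarrow> bool" where
  "meager M \<longleftrightarrow> (\<exists>F. countable F \<and> (\<forall>A\<in>F. nowhere_dense A) \<and> M \<subseteq> \<Union>F)"

definition is_tree :: "nat list set \<Rightarrow> bool" where
  "is_tree T \<longleftrightarrow> T \<noteq> {} \<and> (\<forall>\<sigma> \<tau>. \<tau> \<in> T \<longrightarrow> prefix \<sigma> \<tau> \<longrightarrow> \<sigma> \<in> T)"

definition superperfect :: "nat list set \<Rightarrow> bool" where
  "superperfect T \<longleftrightarrow> is_tree T \<and>
     (\<forall>\<sigma>\<in>T. \<exists>\<tau>\<in>T. prefix \<sigma> \<tau> \<and> infinite {n. \<tau> @ [n] \<in> T})"

definition branches :: "nat list set \<Rightarrow> (nat \<Rightarrow> nat) set" where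
  "branches T = {f. \<forall>n. map f [0..<n] \<in> T}"

end

theory Submission
  imports Defs
begin
definition lsum :: "nat list \<Rightarrow> nat" where "lsum s = sum_list (map Suc s)"
definition sig :: "(nat \<Rightarrow> nat) \<Rightarrow> nat \<Rightarrow> nat" where "sig f k = lsum (map f [0..<k])"

lemma lsum_append[simp]: "lsum (xs @ ys) = lsum xs + lsum ys"
  by (simp add: lsum_def)

lemma lsum_ge_length: "length s \<le> lsum s"
  by (induction s) (auto simp: lsum_def)

lemma fun_nbhd:
  fixes U :: "(nat \<Rightarrow> 'b::topological_space) set"
  assumes "open U" "f \<in> U"
  shows "\<exists>N. \<forall>h. (\<forall>i<N. h i = f i) \<longrightarrow> h \<in> U"
proof -
  obtain X where X: "f \<in> (\<Pi>\<^sub>E i\<in>UNIV. X i)" "finite {i. X i \<noteq> topspace euclidean}"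
    "(\<Pi>\<^sub>E i\<in>UNIV. X i) \<subseteq> U"
    using product_topology_open_contains_basis[OF assms(1)[unfolded open_fun_def] assms(2)] by blast
  define N where "N = Suc (Max (insert 0 {i. X i \<noteq> UNIV}))"
  have fin: "finite {i. X i \<noteq> UNIV}" using X(2) by simp
  have "h \<in> U" if "\<forall>i<N. h i = f i" for h
  proof -
    have "h \<in> (\<Pi>\<^sub>E i\<in>UNIV. X i)"
    proof (simp add: PiE_iff, intro allI)
      fix i
      show "h i \<in> X i"
      proof (cases "X i = UNIV")
        case False
        then have "i \<le> Max (insert 0 {i. X i \<noteq> UNIV})" using fin by auto
        then have "i < N" unfolding N_def by simp
        then show ?thesis using that X(1) by (auto simp: PiE_iff)
      qed simp
    qed
    then show ?thesis using X(3) by blast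
  qed
  then show ?thesis by blast
qed

lemma pair_nbhd:
  fixes U :: "((nat \<Rightarrow> 'b::topological_space) \<times> (nat \<Rightarrow> 'c::topological_space)) set"
  assumes "open U" "(f, g) \<in> U"
  shows "\<exists>N. \<forall>h k. (\<forall>i<N. h i = f i \<and> k i = g i) \<longrightarrow> (h, k) \<in> U"
proof -
  obtain A B where AB: "open A" "open B" "(f,g) \<in> A \<times> B" "A \<times> B \<subseteq> U"
    using open_prod_elim[OF assms] by metis
  obtain N1 where N1: "\<forall>h. (\<forall>i<N1. h i = f i) \<longrightarrow> h \<in> A" using fun_nbhd AB by blast
  obtain N2 where N2: "\<forall>h. (\<forall>i<N2. h i = g i) \<longrightarrow> h \<in> B" using fun_nbhd AB by blast
  show ?thesis
    by (rule exI[of _ "max N1 N2"]) (use N1 N2 AB(4) in auto)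
qed

lemma box_open:
  "open {p :: (nat \<Rightarrow> nat) \<times> (nat \<Rightarrow> nat). \<forall>i<N. fst p i = f i \<and> snd p i = g i}"
proof -
  have o1: "open {h :: nat \<Rightarrow> nat. \<forall>i\<in>{..<N}. h (id i) \<in> {f i}}"
    by (rule product_topology_basis') (auto simp: open_discrete)
  have o2: "open {h :: nat \<Rightarrow> nat. \<forall>i\<in>{..<N}. h (id i) \<in> {g i}}"
    by (rule product_topology_basis') (auto simp: open_discrete)
  have "{p :: (nat \<Rightarrow> nat) \<times> (nat \<Rightarrow> nat). \<forall>i<N. fst p i = f i \<and> snd p i = g i}
      = {h :: nat \<Rightarrow> nat. \<forall>i\<in>{..<N}. h (id i) \<in> {f i}} \<times> {h :: nat \<Rightarrow> nat. \<forall>i\<in>{..<N}. h (id i) \<in> {g i}}"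
    by auto
  then show ?thesis using open_Times[OF o1 o2] by simp
qed

definition Aset :: "nat \<Rightarrow> ((nat \<Rightarrow> nat) \<times> (nat \<Rightarrow> nat)) set" where
  "Aset N = {p. \<forall>k j. sig (fst p) k = sig (snd p) j \<longrightarrow> sig (fst p) k < N}"

lemma sig_cong: "(\<forall>i<n. h i = f i) \<Longrightarrow> sig h n = sig f n"
  unfolding sig_def by (intro arg_cong[where f=lsum] map_cong) auto

lemma sig_Suc: "sig f (Suc n) = sig f n + Suc (f n)"
  by (simp add: sig_def lsum_def)

lemma Aset_nd: "nowhere_dense (Aset N)"
  unfolding nowhere_dense_def
proof (rule ccontr)
  assume "interior (closure (Aset N)) \<noteq> {}"
  then obtain p where "p \<in> interior (closure (Aset N))" by blast
  then obtain U where U: "open U" "p \<in> U" "U \<subseteq> closure (Aset N)" by (meson interiorE)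
  obtain f g where p: "p = (f, g)" by (cases p)
  obtain N0 where N0: "\<forall>h k. (\<forall>i<N0. h i = f i \<and> k i = g i) \<longrightarrow> (h, k) \<in> U"
    using pair_nbhd U p by blast
  define X where "X = sig f N0 + sig g N0 + N + 1"
  define f' where "f' = f(N0 := X - sig f N0 - 1)"
  define g' where "g' = g(N0 := X - sig g N0 - 1)"
  have "(f', g') \<in> U" using N0 unfolding f'_def g'_def by auto
  define W where "W = {p :: (nat \<Rightarrow> nat) \<times> (nat \<Rightarrow> nat). \<forall>i<Suc N0. fst p i = f' i \<and> snd p i = g' i}"
  have "open W" unfolding W_def by (rule box_open)
  have "(f', g') \<in> W \<inter> closure (Aset N)" using \<open>(f', g') \<in> U\<close> U(3) unfolding W_def by auto
  then have "W \<inter> Aset N \<noteq> {}" using open_Int_closure_eq_empty[OF \<open>open W\<close>] by blast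
  then obtain h k where hk: "(h, k) \<in> W" "(h, k) \<in> Aset N" by auto
  have sf: "sig f' N0 = sig f N0" by (rule sig_cong) (simp add: f'_def)
  have sg: "sig g' N0 = sig g N0" by (rule sig_cong) (simp add: g'_def)
  have "sig h (Suc N0) = sig f' (Suc N0)" by (rule sig_cong) (use hk(1) in \<open>simp add: W_def\<close>)
  also have "\<dots> = X" using sf unfolding sig_Suc f'_def X_def by simp
  finally have h1: "sig h (Suc N0) = X" .
  have "sig k (Suc N0) = sig g' (Suc N0)" by (rule sig_cong) (use hk(1) in \<open>simp add: W_def\<close>)
  also have "\<dots> = X" using sg unfolding sig_Suc g'_def X_def by simp
  finally have h2: "sig k (Suc N0) = X" .
  have "\<forall>k' j. sig h k' = sig k j \<longrightarrow> sig h k' < N" using hk(2) unfolding Aset_def by simp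
  then have "X < N" using h1 h2 by metis
  then show False unfolding X_def by simp
qed

definition Mset :: "((nat \<Rightarrow> nat) \<times> (nat \<Rightarrow> nat)) set" where
  "Mset = {p. finite (range (sig (fst p)) \<inter> range (sig (snd p)))}"

lemma Mset_meager: "meager Mset"
  unfolding meager_def
proof (intro exI[of _ "range Aset"] conjI ballI)
  show "countable (range Aset)" by simp
  show "nowhere_dense A" if "A \<in> range Aset" for A using that Aset_nd by auto
  show "Mset \<subseteq> \<Union> (range Aset)"
  proof
    fix p assume "p \<in> Mset"
    then have fin: "finite (range (sig (fst p)) \<inter> range (sig (snd p)))" unfolding Mset_def by simp
    define N where "N = Suc (Max (insert 0 (range (sig (fst p)) \<inter> range (sig (snd p)))))"
    have "p \<in> Aset N"
      unfolding Aset_def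
    proof (clarify)
      fix k j assume "sig (fst p) k = sig (snd p) j"
      then have "sig (fst p) k \<in> insert 0 (range (sig (fst p)) \<inter> range (sig (snd p)))" by (metis IntI insertCI rangeI)
      then have "sig (fst p) k \<le> Max (insert 0 (range (sig (fst p)) \<inter> range (sig (snd p))))"
        using fin by simp
      then show "sig (fst p) k < N" unfolding N_def by simp
    qed
    then show "p \<in> \<Union> (range Aset)" by blast
  qed
qed

definition spl :: "nat list set \<Rightarrow> nat list \<Rightarrow> bool" where
  "spl T s \<longleftrightarrow> s \<in> T \<and> infinite {n. s @ [n] \<in> T}"

definition good_ext :: "nat list set \<Rightarrow> nat list \<Rightarrow> nat \<Rightarrow> nat list \<Rightarrow> bool" where
  "good_ext T s m s' \<longleftrightarrow> spl T s' \<and> prefix s s' \<and> length s < length s' \<and>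
     (\<forall>k. length s < k \<longrightarrow> k \<le> length s' \<longrightarrow> m < lsum (take k s'))"

definition ext_node :: "nat list set \<Rightarrow> nat list \<Rightarrow> nat \<Rightarrow> nat list" where
  "ext_node T s m = (SOME s'. good_ext T s m s')"

primrec pseq :: "nat list set \<Rightarrow> nat list \<Rightarrow> nat \<Rightarrow> nat list \<times> nat list" where
  "pseq T t 0 = (t, t)"
| "pseq T t (Suc n) = (let u' = ext_node T (fst (pseq T t n)) (lsum (snd (pseq T t n)))
                        in (u', ext_node T (snd (pseq T t n)) (lsum u')))"

lemma lsum_take_le: "lsum (take k s) \<le> lsum s"
proof -
  have "lsum s = lsum (take k s) + lsum (drop k s)" by (metis append_take_drop_id lsum_append)
  then show ?thesis by simp
qed

lemma lsum_take_mono: "k \<le> k' \<Longrightarrow> lsum (take k s) \<le> lsum (take k' s)"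
proof -
  assume "k \<le> k'"
  then have "take k s = take k (take k' s)" by simp
  then show ?thesis using lsum_take_le[of k "take k' s"] by simp
qed

lemma good_ext_exists:
  assumes sp: "superperfect T" and s: "spl T s"
  shows "good_ext T s m (ext_node T s m)"
proof -
  have "infinite {n. s @ [n] \<in> T}" using s unfolding spl_def by simp
  then have "\<exists>n>m. n \<in> {n. s @ [n] \<in> T}" using infinite_nat_iff_unbounded by blast
  then obtain a where a: "a > m" "s @ [a] \<in> T" by blast
  then obtain t where t: "t \<in> T" "prefix (s @ [a]) t" "infinite {n. t @ [n] \<in> T}"
    using sp unfolding superperfect_def by blast
  have "good_ext T s m t"
    unfolding good_ext_def spl_def
  proof (intro conjI allI impI)
    show "t \<in> T" "infinite {n. t @ [n] \<in> T}" by fact+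
    show "prefix s t" using t(2) by (auto simp: prefix_def)
    have "length (s @ [a]) \<le> length t" using t(2) by (rule prefix_length_le)
    then show "length s < length t" by simp
    fix k assume k: "length s < k" "k \<le> length t"
    have tk: "take (Suc (length s)) t = s @ [a]"
      using t(2) by (auto simp: prefix_def)
    have "m < lsum (s @ [a])" using a by (simp add: lsum_def)
    also have "\<dots> = lsum (take (Suc (length s)) t)" using tk by simp
    also have "\<dots> \<le> lsum (take k t)" using k by (intro lsum_take_mono) simp
    finally show "m < lsum (take k t)" .
  qed
  then show ?thesis unfolding ext_node_def by (rule someI)
qed

lemma take_prefix_eq: "prefix v v' \<Longrightarrow> j \<le> length v \<Longrightarrow> take j v' = take j v"
  by (auto simp: prefix_def)

lemma pseq_props:
  assumes sp: "superperfect T" and t: "spl T t"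
  shows "spl T (fst (pseq T t n)) \<and> spl T (snd (pseq T t n)) \<and>
         lsum (fst (pseq T t n)) \<le> lsum (snd (pseq T t n)) \<and>
         (\<forall>k j. k \<le> length (fst (pseq T t n)) \<longrightarrow> j \<le> length (snd (pseq T t n)) \<longrightarrow>
             lsum (take k (fst (pseq T t n))) = lsum (take j (snd (pseq T t n))) \<longrightarrow>
             lsum (take k (fst (pseq T t n))) \<le> lsum t)"
proof (induction n)
  case 0
  then show ?case using t by (simp add: lsum_take_le)
next
  case (Suc n)
  define u where "u = fst (pseq T t n)"
  define v where "v = snd (pseq T t n)"
  define u' where "u' = ext_node T u (lsum v)"
  define v' where "v' = ext_node T v (lsum u')"
  have IH: "spl T u" "spl T v" "lsum u \<le> lsum v"
    "\<And>k j. k \<le> length u \<Longrightarrow> j \<le> length v \<Longrightarrow> lsum (take k u) = lsum (take j v) \<Longrightarrow> lsum (take k u) \<le> lsum t"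
    using Suc.IH unfolding u_def v_def by auto
  have gu: "good_ext T u (lsum v) u'" unfolding u'_def by (rule good_ext_exists[OF sp IH(1)])
  have gv: "good_ext T v (lsum u') v'" unfolding v'_def by (rule good_ext_exists[OF sp IH(2)])
  have ps: "pseq T t (Suc n) = (u', v')" by (simp add: u'_def v'_def u_def v_def Let_def)
  have "lsum u' < lsum (take (length v') v')"
    using gv unfolding good_ext_def by blast
  then have "lsum u' < lsum v'" by simp
  moreover have "lsum (take k u') \<le> lsum t"
    if k: "k \<le> length u'" and j: "j \<le> length v'" and eq: "lsum (take k u') = lsum (take j v')" for k j
  proof (cases "k \<le> length u")
    case True
    have ku: "take k u' = take k u" using gu True unfolding good_ext_def by (simp add: take_prefix_eq)
    show ?thesis
    proof (cases "j \<le> length v")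
      case True
      have "take j v' = take j v" using gv True unfolding good_ext_def by (simp add: take_prefix_eq)
      then show ?thesis using IH(4)[of k j] ku eq \<open>k \<le> length u\<close> True by simp
    next
      case False
      have "lsum u' < lsum (take j v')" using gv False j unfolding good_ext_def by simp
      moreover have "lsum (take k u') \<le> lsum u'" by (rule lsum_take_le)
      ultimately show ?thesis using eq by simp
    qed
  next
    case False
    have big: "lsum v < lsum (take k u')" using gu False k unfolding good_ext_def by simp
    show ?thesis
    proof (cases "j \<le> length v")
      case True
      have "take j v' = take j v" using gv True unfolding good_ext_def by (simp add: take_prefix_eq)
      then have "lsum (take j v') \<le> lsum v" by (simp add: lsum_take_le)
      then show ?thesis using big eq by simp
    next
      case False
      have "lsum u' < lsum (take j v')" using gv False j unfolding good_ext_def by simp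
      moreover have "lsum (take k u') \<le> lsum u'" by (rule lsum_take_le)
      ultimately show ?thesis using eq by simp
    qed
  qed
  ultimately show ?case using gu gv unfolding ps good_ext_def by auto
qed

lemma pseq_grow:
  assumes sp: "superperfect T" and t: "spl T t"
  shows "prefix (fst (pseq T t n)) (fst (pseq T t (Suc n))) \<and> length (fst (pseq T t n)) < length (fst (pseq T t (Suc n)))
       \<and> prefix (snd (pseq T t n)) (snd (pseq T t (Suc n))) \<and> length (snd (pseq T t n)) < length (snd (pseq T t (Suc n)))"
proof -
  have P: "spl T (fst (pseq T t n))" "spl T (snd (pseq T t n))" using pseq_props[OF sp t, of n] by auto
  show ?thesis
    using good_ext_exists[OF sp P(1)] good_ext_exists[OF sp P(2)]
    by (simp add: Let_def good_ext_def)
qed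

lemma chain_le:
  assumes "\<And>n. prefix (u n) (u (Suc n))"
  shows "a \<le> b \<Longrightarrow> prefix (u a) (u b)"
proof (induction b)
  case 0 then show ?case by simp
next
  case (Suc b)
  show ?case
  proof (cases "a = Suc b")
    case False
    then have "a \<le> b" using Suc.prems by simp
    then show ?thesis using Suc.IH assms[of b] prefix_order.trans by blast
  qed simp
qed

lemma chain_len:
  assumes "\<And>n. length (u n) < length (u (Suc n))"
  shows "n \<le> length (u n)"
proof (induction n)
  case (Suc n) then show ?case using assms[of n] by simp
qed simp

lemma prefix_nth_eq: "prefix xs ys \<Longrightarrow> i < length xs \<Longrightarrow> xs ! i = ys ! i"
  by (auto simp: prefix_def nth_append)

lemma chain_branch:
  assumes pre: "\<And>n. prefix (u n) (u (Suc n))" and len: "\<And>n. length (u n) < length (u (Suc n))"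
  shows "k \<le> length (u m) \<Longrightarrow> map (\<lambda>i. u (Suc i) ! i) [0..<k] = take k (u m)"
proof -
  assume km: "k \<le> length (u m)"
  show ?thesis
  proof (rule nth_equalityI)
    show "length (map (\<lambda>i. u (Suc i) ! i) [0..<k]) = length (take k (u m))" using km by simp
    fix i assume "i < length (map (\<lambda>i. u (Suc i) ! i) [0..<k])"
    then have i: "i < k" by simp
    have l1: "i < length (u (Suc i))" using chain_len[of u, OF len, of "Suc i"] by simp
    have "u (Suc i) ! i = u m ! i"
    proof (cases "Suc i \<le> m")
      case True
      then show ?thesis using chain_le[of u, OF pre True] l1 prefix_nth_eq by blast
    next
      case False
      then have mi: "m \<le> Suc i" by simp
      show ?thesis using chain_le[of u, OF pre mi] i km prefix_nth_eq[of "u m" "u (Suc i)" i] by simp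
    qed
    then show "map (\<lambda>i. u (Suc i) ! i) [0..<k] ! i = take k (u m) ! i" using i by simp
  qed
qed

lemma main_comb:
  assumes sp: "superperfect T"
  shows "\<exists>f\<in>branches T. \<exists>g\<in>branches T. f \<noteq> g \<and> (f, g) \<in> Mset"
proof -
  have tree: "is_tree T" using sp unfolding superperfect_def by simp
  then obtain s where "s \<in> T" unfolding is_tree_def by blast
  then have "[] \<in> T" using tree unfolding is_tree_def by (meson Nil_prefix)
  then obtain t where t0: "t \<in> T" "infinite {n. t @ [n] \<in> T}"
    using sp unfolding superperfect_def by blast
  have t: "spl T t" using t0 unfolding spl_def by simp
  define u where "u = (\<lambda>n. fst (pseq T t n))"
  define v where "v = (\<lambda>n. snd (pseq T t n))"
  have pu: "\<And>n. prefix (u n) (u (Suc n))" "\<And>n. length (u n) < length (u (Suc n))"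
    using pseq_grow[OF sp t] unfolding u_def by auto
  have pv: "\<And>n. prefix (v n) (v (Suc n))" "\<And>n. length (v n) < length (v (Suc n))"
    using pseq_grow[OF sp t] unfolding v_def by auto
  define f where "f = (\<lambda>i. u (Suc i) ! i)"
  define g where "g = (\<lambda>i. v (Suc i) ! i)"
  have fu: "\<And>k m. k \<le> length (u m) \<Longrightarrow> map f [0..<k] = take k (u m)"
    unfolding f_def by (rule chain_branch[of u, OF pu])
  have gv: "\<And>k m. k \<le> length (v m) \<Longrightarrow> map g [0..<k] = take k (v m)"
    unfolding g_def by (rule chain_branch[of v, OF pv])
  have uT: "u n \<in> T" for n using pseq_props[OF sp t, of n] unfolding u_def spl_def by auto
  have vT: "v n \<in> T" for n using pseq_props[OF sp t, of n] unfolding v_def spl_def by auto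
  have ulen: "n \<le> length (u n)" for n using chain_len[of u, OF pu(2)] .
  have vlen: "n \<le> length (v n)" for n using chain_len[of v, OF pv(2)] .
  have fB: "f \<in> branches T"
    unfolding branches_def
  proof (clarify)
    fix n
    have "map f [0..<n] = take n (u n)" using fu ulen by blast
    moreover have "prefix (take n (u n)) (u n)" by (rule take_is_prefix)
    ultimately show "map f [0..<n] \<in> T" using tree uT unfolding is_tree_def by auto
  qed
  have gB: "g \<in> branches T"
    unfolding branches_def
  proof (clarify)
    fix n
    have "map g [0..<n] = take n (v n)" using gv vlen by blast
    moreover have "prefix (take n (v n)) (v n)" by (rule take_is_prefix)
    ultimately show "map g [0..<n] \<in> T" using tree vT unfolding is_tree_def by auto
  qed
  have sub: "range (sig f) \<inter> range (sig g) \<subseteq> {..lsum t}"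
  proof
    fix x assume "x \<in> range (sig f) \<inter> range (sig g)"
    then obtain k j where x: "x = sig f k" "x = sig g j" by blast
    define m where "m = max k j"
    have km: "k \<le> length (u m)" using ulen[of m] unfolding m_def by simp
    have jm: "j \<le> length (v m)" using vlen[of m] unfolding m_def by simp
    have "sig f k = lsum (take k (u m))" unfolding sig_def using fu[OF km] by simp
    moreover have "sig g j = lsum (take j (v m))" unfolding sig_def using gv[OF jm] by simp
    ultimately have eq: "lsum (take k (u m)) = lsum (take j (v m))" using x by simp
    have P: "\<forall>k j. k \<le> length (u m) \<longrightarrow> j \<le> length (v m) \<longrightarrow>
        lsum (take k (u m)) = lsum (take j (v m)) \<longrightarrow> lsum (take k (u m)) \<le> lsum t"
      using pseq_props[OF sp t, of m] unfolding u_def v_def by blast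
    have "lsum (take k (u m)) \<le> lsum t" using P km jm eq by blast
    then show "x \<in> {..lsum t}" using x \<open>sig f k = lsum (take k (u m))\<close> by simp
  qed
  then have fin: "finite (range (sig f) \<inter> range (sig g))" using finite_subset by blast
  have "f \<noteq> g"
  proof
    assume "f = g"
    then have "sig f (Suc (lsum t)) \<in> {..lsum t}" using sub by auto
    moreover have "Suc (lsum t) \<le> sig f (Suc (lsum t))"
      unfolding sig_def using lsum_ge_length[of "map f [0..<Suc (lsum t)]"] by simp
    ultimately show False by simp
  qed
  moreover have "(f, g) \<in> Mset" using fin unfolding Mset_def by simp
  ultimately show ?thesis using fB gB by blast
qed

theorem proposition5p3:
  "\<exists>M :: ((nat \<Rightarrow> nat) \<times> (nat \<Rightarrow> nat)) set. meager M \<and>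
     (\<forall>T. superperfect T \<longrightarrow> (\<exists>f\<in>branches T. \<exists>g\<in>branches T. f \<noteq> g \<and> (f, g) \<in> M))"
  by (rule exI[of _ Mset]) (simp add: Mset_meager main_comb)

end
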